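(* Let $T=(V,E)$ be a temporal bipartite graph with $m=|E|$ edges, let $\tau>0$, $i\in\{1,\dots,6\}$ and $\varepsilon,\delta\in(0,1)$. Then (a) if $p\ge\frac{1}{1+\delta\varepsilon^2}$, the estimator $\widehat{C}_i$ returned by \texttt{TBC-E} or by \texttt{TBC-N} with sampling probability $p$ is an $(\varepsilon,\delta)$-estimator of $C_i$; and (b) for any $c>0$, if $s\ge\frac{(m-1)\ln(2/\delta)}{(1+\varepsilon)\ln(1+\varepsilon)-\varepsilon}$, the estimator $\widehat{C}_i$ returned by \texttt{TBC-I} with parameters $s,c$ is an $(\varepsilon,\delta)$-estimator of $C_i$. Here $\widehat{C}_i$ is an $(\varepsilon,\delta)$-estimator of $C_i$ if $\Pr[|\widehat{C}_i-C_i|\ge\varepsilon C_i]\le\delta$.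
   Context: A temporal bipartite graph $T=(V,E)$ has node set $V=U\cup L$ with $U\cap L=\emptyset$ and a finite (multi)set $E\subseteq U\times L\times\mathbb{R}^+$ of temporal edges $(u,l,t)$; $m=|E|$. A temporal butterfly $B_i$ ($i=1,\dots,6$) is the butterfly on nodes $u'_1,u'_2$ (upper side) and $l'_1,l'_2$ (lower side) with edges $(u'_1,l'_1),(u'_2,l'_1),(u'_1,l'_2),(u'_2,l'_2)$ together with an ordering $\sigma_i$ of these four edges; $\sigma_1,\dots,\sigma_6$ are the six orderings in which $(u'_1,l'_1)$ comes first. Given $\tau>0$, a set $S$ of four temporal edges $\{(u_x,l_x,t_1),(u_y,l_x,t_2),(u_x,l_y,t_3),(u_y,l_y,t_4)\}$ of $T$ with $u_x\ne u_y\in U$, $l_x\ne l_y\in L$ is a $\tau$-instance of $B_i$ if, under the map $u_x\mapsto u'_1,u_y\mapsto u'_2,l_x\mapsto l'_1,l_y\mapsto l'_2$, the order of the four edges by timestamp matches $\sigma_i$ (so $(u_x,l_x,t_1)$ has the smallest timestamp), and $\max_{j\in\{2,3,4\}}t_j-t_1\le\tau$. $C_i$ is the number of $\tau$-instances of $B_i$ in $T$; for $e\in E$, $C_i(e)$ is the number of $\tau$-instances of $B_i$ whose first (smallest-timestamp) edge is $e$. \texttt{TBC-E}: each edge $e\in E$ is put into $\widehat{E}$ independently with probability $p$; output $\widehat{C}_i=\sum_{e\in\widehat{E}}C_i(e)/p$. \texttt{TBC-N}: each node $u\in U$ (alternatively, each node of $L$) is put into $\widehat{U}$ independently with probability $p$;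 $\widehat{E}$ is the set of edges incident to $\widehat{U}$; output $\widehat{C}_i=\sum_{e\in\widehat{E}}C_i(e)/p$. \texttt{TBC-I} with parameters $s\in\mathbb{Z}_{>0}$, $c>0$: draw $s$ edges from $E$ uniformly at random and independently; for each drawn edge with timestamp $t'$, add to the multiset $\widehat{E}$ every edge of $E$ with timestamp in $[t',t'+c\tau]$; for $e=(u,l,t)$ let $m'_e$ be the number of edges of $E$ with timestamp in $[t-c\tau,t]$; output $\widehat{C}_i=\sum_{e\in\widehat{E}}\frac{m}{s\,m'_e}C_i(e)$ (counting multiplicities). *)

theory Defs
  imports "HOL-Probability.Probability"
begin

(* The (multi)set E of temporal edges is
   represented as a list; an edge is identified by its index in {..<length E},
   so repeated copies of the same triple are distinct edges. *)

definition temporal_bipartite_graph ::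
  "'v set \<Rightarrow> 'v set \<Rightarrow> ('v \<times> 'v \<times> real) list \<Rightarrow> bool" where
  "temporal_bipartite_graph U L E \<longleftrightarrow>
     finite U \<and> finite L \<and> U \<inter> L = {} \<and>
     (\<forall>x\<in>set E. fst x \<in> U \<and> fst (snd x) \<in> L \<and> snd (snd x) > 0)"

definition up_of :: "('v \<times> 'v \<times> real) list \<Rightarrow> nat \<Rightarrow> 'v" where
  "up_of E e = fst (E ! e)"
definition lo_of :: "('v \<times> 'v \<times> real) list \<Rightarrow> nat \<Rightarrow> 'v" where
  "lo_of E e = fst (snd (E ! e))"
definition ts_of :: "('v \<times> 'v \<times> real) list \<Rightarrow> nat \<Rightarrow> real" where
  "ts_of E e = snd (snd (E ! e))"

(* Roles: 1 = (u'1,l'1), 2 = (u'2,l'1), 3 = (u'1,l'2), 4 = (u'2,l'2).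
   sigma i (i = 1..6) lists the four roles in temporal order; role 1 first. *)
definition sigma :: "nat \<Rightarrow> nat list" where
  "sigma i = 1 # ([[2,3,4],[2,4,3],[3,2,4],[3,4,2],[4,2,3],[4,3,2]] ! (i - 1))"

(* (a,b,c,d) = edges (u_x,l_x,t1),(u_y,l_x,t2),(u_x,l_y,t3),(u_y,l_y,t4) *)
definition is_inst ::
  "('v \<times> 'v \<times> real) list \<Rightarrow> real \<Rightarrow> nat \<Rightarrow> nat \<Rightarrow> nat \<Rightarrow> nat \<Rightarrow> nat \<Rightarrow> bool" where
  "is_inst E \<tau> i a b c d \<longleftrightarrow>
     a < length E \<and> b < length E \<and> c < length E \<and> d < length E \<and>
     up_of E a = up_of E c \<and> up_of E b = up_of E d \<and>
     lo_of E a = lo_of E b \<and> lo_of E c = lo_of E d \<and>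
     up_of E a \<noteq> up_of E b \<and> lo_of E a \<noteq> lo_of E c \<and>
     sorted_wrt (<) (map (\<lambda>k. ts_of E ([a, b, c, d] ! (k - 1))) (sigma i)) \<and>
     max (ts_of E b) (max (ts_of E c) (ts_of E d)) - ts_of E a \<le> \<tau>"

definition instances :: "('v \<times> 'v \<times> real) list \<Rightarrow> real \<Rightarrow> nat \<Rightarrow> nat set set" where
  "instances E \<tau> i = {S. \<exists>a b c d. S = {a, b, c, d} \<and> is_inst E \<tau> i a b c d}"

definition C_count :: "('v \<times> 'v \<times> real) list \<Rightarrow> real \<Rightarrow> nat \<Rightarrow> nat" where
  "C_count E \<tau> i = card (instances E \<tau> i)"

(* C_i(e): number of instances whose first (smallest-timestamp) edge is e *)
definition C_edge :: "('v \<times> 'v \<times> real) list \<Rightarrow> real \<Rightarrow> nat \<Rightarrow> nat \<Rightarrow> nat" where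
  "C_edge E \<tau> i e = card {S. \<exists>b c d. S = {e, b, c, d} \<and> is_inst E \<tau> i e b c d}"

definition tbcE :: "('v \<times> 'v \<times> real) list \<Rightarrow> real \<Rightarrow> nat \<Rightarrow> real \<Rightarrow> real pmf" where
  "tbcE E \<tau> i p =
     map_pmf (\<lambda>f. \<Sum>e\<in>{e. e < length E \<and> f e}. real (C_edge E \<tau> i e) / p)
       (Pi_pmf {..<length E} False (\<lambda>_. bernoulli_pmf p))"

(* TBC-N: sample nodes of the side W (W = U, proj = upper endpoint; or
   W = L, proj = lower endpoint); keep the edges incident to sampled nodes *)
definition tbcN :: "'v set \<Rightarrow> (nat \<Rightarrow> 'v) \<Rightarrow> ('v \<times> 'v \<times> real) list \<Rightarrow> real \<Rightarrow> nat \<Rightarrow> real \<Rightarrow> real pmf" where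
  "tbcN W proj E \<tau> i p =
     map_pmf (\<lambda>f. \<Sum>e\<in>{e. e < length E \<and> proj e \<in> W \<and> f (proj e)}. real (C_edge E \<tau> i e) / p)
       (Pi_pmf W False (\<lambda>_. bernoulli_pmf p))"

definition tbcN_U :: "'v set \<Rightarrow> ('v \<times> 'v \<times> real) list \<Rightarrow> real \<Rightarrow> nat \<Rightarrow> real \<Rightarrow> real pmf" where
  "tbcN_U U E = tbcN U (up_of E) E"

definition tbcN_L :: "'v set \<Rightarrow> ('v \<times> 'v \<times> real) list \<Rightarrow> real \<Rightarrow> nat \<Rightarrow> real \<Rightarrow> real pmf" where
  "tbcN_L L E = tbcN L (lo_of E) E"

definition m_prime :: "('v \<times> 'v \<times> real) list \<Rightarrow> real \<Rightarrow> real \<Rightarrow> nat \<Rightarrow> nat" where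
  "m_prime E \<tau> c e = card {e'. e' < length E \<and> ts_of E e - c * \<tau> \<le> ts_of E e' \<and> ts_of E e' \<le> ts_of E e}"

(* TBC-I: s independent uniform draws d 0, ..., d (s-1) from E; the multiset
   \<widehat>E is the sum over draws of the edges in the window [t', t' + c tau] *)
definition tbcI :: "('v \<times> 'v \<times> real) list \<Rightarrow> real \<Rightarrow> nat \<Rightarrow> real \<Rightarrow> nat \<Rightarrow> real pmf" where
  "tbcI E \<tau> i c s =
     map_pmf (\<lambda>d. \<Sum>j<s. \<Sum>e\<in>{e. e < length E \<and> ts_of E (d j) \<le> ts_of E e \<and> ts_of E e \<le> ts_of E (d j) + c * \<tau>}.
                     real (length E) / (real s * real (m_prime E \<tau> c e)) * real (C_edge E \<tau> i e))
       (Pi_pmf {..<s} 0 (\<lambda>_. pmf_of_set {..<length E}))"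

definition eps_delta_estimator :: "real pmf \<Rightarrow> real \<Rightarrow> real \<Rightarrow> real \<Rightarrow> bool" where
  "eps_delta_estimator X C \<epsilon> \<delta> \<longleftrightarrow> measure_pmf.prob X {x. \<bar>x - C\<bar> \<ge> \<epsilon> * C} \<le> \<delta>"

end

theory Submission
  imports Defs
begin


lemma exp_series2: "(\<lambda>n. (x::real)^(n+2) / fact (n+2)) sums (exp x - 1 - x)"
proof -
  have "(\<lambda>n. x^n / fact n) sums exp x" using exp_converges[of x] by (simp add: divide_inverse mult.commute)
  hence "(\<lambda>n. x^(Suc n) / fact (Suc n)) sums (exp x - 1)" by (subst sums_Suc_iff) simp
  hence "(\<lambda>n. x^(Suc (Suc n)) / fact (Suc (Suc n))) sums (exp x - 1 - x)" by (subst sums_Suc_iff) simp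
  thus ?thesis by simp
qed

lemma phi_mono:
  assumes "0 < x" "x \<le> y"
  shows "(exp x - 1 - x) / x^2 \<le> (exp (y::real) - 1 - y) / y^2"
proof -
  have sx: "(\<lambda>n. x^(n+2) / fact (n+2) / x^2) sums ((exp x - 1 - x)/x^2)"
    by (rule sums_divide[OF exp_series2])
  have sy: "(\<lambda>n. y^(n+2) / fact (n+2) / y^2) sums ((exp y - 1 - y)/y^2)"
    by (rule sums_divide[OF exp_series2])
  show ?thesis
  proof (rule sums_le[OF _ sx sy])
    fix n
    define f :: real where "f = fact (n+2)"
    have fp: "f > 0" unfolding f_def by simp
    have "x^(n+2) / f / x^2 = x^n / f" using assms fp by (simp add: power_add power2_eq_square)
    also have "\<dots> \<le> y^n / f" using assms fp by (intro divide_right_mono power_mono) auto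
    also have "\<dots> = y^(n+2) / f / y^2" using assms fp by (simp add: power_add power2_eq_square)
    finally show "x^(n+2) / fact (n+2) / x^2 \<le> y^(n+2) / fact (n+2) / y^2" unfolding f_def .
  qed
qed

lemma exp_quad_neg:
  assumes "(x::real) \<le> 0"
  shows "exp x \<le> 1 + x + x^2/2"
proof -
  define F where "F u = exp u * (1 - u + u^2/2)" for u :: real
  have d: "(F has_real_derivative exp u * u^2/2) (at u)" for u
    unfolding F_def by (auto intro!: derivative_eq_intros simp: power2_eq_square algebra_simps)
  have "F 0 \<le> F (-x)"
    by (rule DERIV_nonneg_imp_nondecreasing[of 0 "-x" F]) (use assms d in \<open>auto intro!: exI\<close>)
  hence "1 \<le> exp (-x) * (1 + x + x^2/2)" by (simp add: F_def)
  hence "exp x * 1 \<le> exp x * (exp (-x) * (1 + x + x^2/2))" by simp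
  also have "\<dots> = (exp x * exp (-x)) * (1 + x + x^2/2)" by (simp only: mult.assoc)
  also have "\<dots> = 1 + x + x^2/2" by (simp add: exp_minus_inverse)
  finally show ?thesis by simp
qed

lemma bennett_pt:
  fixes w b l :: real
  assumes "w \<le> b" "b > 0" "l > 0"
  shows "exp (l * w) \<le> 1 + l * w + w^2 * ((exp (l*b) - 1 - l*b) / b^2)"
proof (cases "w \<le> 0")
  case True
  have "exp (l*w) \<le> 1 + l*w + (l*w)^2/2" using True assms by (intro exp_quad_neg) (simp add: mult_nonneg_nonpos)
  also have "(l*w)^2/2 = w^2 * (l^2/2)" by (simp add: power_mult_distrib)
  also have "l^2/2 \<le> (exp (l*b) - 1 - l*b) / b^2"
  proof -
    have "1 + l*b + (l*b)^2/2 \<le> exp (l*b)" using assms by (intro exp_lower_Taylor_quadratic) simp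
    thus ?thesis using assms by (simp add: field_simps power_mult_distrib)
  qed
  hence "w^2 * (l^2/2) \<le> w^2 * ((exp (l*b) - 1 - l*b) / b^2)" by (intro mult_left_mono) auto
  finally show ?thesis by simp
next
  case False
  hence wp: "w > 0" by simp
  have "(exp (l*w) - 1 - l*w) / (l*w)^2 \<le> (exp (l*b) - 1 - l*b) / (l*b)^2"
    using assms wp by (intro phi_mono) (auto intro: mult_left_mono)
  hence "(exp (l*w) - 1 - l*w) / (l*w)^2 * (l*w)^2 \<le> (exp (l*b) - 1 - l*b) / (l*b)^2 * (l*w)^2"
    by (intro mult_right_mono) auto
  hence "exp (l*w) - 1 - l*w \<le> (exp (l*b) - 1 - l*b) / (l*b)^2 * (l*w)^2"
    using wp assms by simp
  also have "(exp (l*b) - 1 - l*b) / (l*b)^2 * (l*w)^2 = w^2 * ((exp (l*b) - 1 - l*b) / b^2)"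
    using assms by (simp add: power_mult_distrib field_simps)
  finally show ?thesis by simp
qed


lemma finite_set_Pi_pmf:
  assumes "finite I" "\<And>i. i \<in> I \<Longrightarrow> finite (set_pmf (p i))"
  shows "finite (set_pmf (Pi_pmf I dflt p))"
  using assms by (subst set_Pi_pmf) (auto intro!: finite_PiE_dflt)

lemma chernoff_gen:
  fixes Q :: "'a pmf" and W :: "'a \<Rightarrow> real" and I :: "'i set"
  assumes fin: "finite (set_pmf Q)" and I: "finite I"
    and Wb: "\<And>x. x \<in> set_pmf Q \<Longrightarrow> W x \<le> b" and b: "b > 0"
    and m0: "measure_pmf.expectation Q W = 0"
    and m2: "measure_pmf.expectation Q (\<lambda>x. (W x)^2) \<le> b"
    and e: "\<epsilon> > 0"
  shows "measure_pmf.prob (Pi_pmf I dflt (\<lambda>_. Q)) {d. real (card I) * \<epsilon> \<le> (\<Sum>j\<in>I. W (d j))}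
           \<le> exp (- real (card I) * ((1+\<epsilon>) * ln (1+\<epsilon>) - \<epsilon>) / b)"
proof -
  define l where "l = ln (1+\<epsilon>) / b"
  have lpos: "l > 0" unfolding l_def using b e by simp
  have lb: "l * b = ln (1+\<epsilon>)" unfolding l_def using b by simp
  have elb: "exp (l*b) = 1+\<epsilon>" using lb e by simp
  define K where "K = (exp (l*b) - 1 - l*b) / b^2"
  have K0: "K \<ge> 0" unfolding K_def using exp_ge_add_one_self[of "l*b"] by (intro divide_nonneg_nonneg) (linarith, simp)
  define P where "P = Pi_pmf I dflt (\<lambda>_. Q)"
  have finP: "finite (set_pmf P)" unfolding P_def by (rule finite_set_Pi_pmf[OF I fin])
  have intQ: "integrable (measure_pmf Q) f" for f :: "'a \<Rightarrow> real"
    by (rule integrable_measure_pmf_finite[OF fin])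
  have intP: "integrable (measure_pmf P) f" for f :: "('i \<Rightarrow> 'a) \<Rightarrow> real"
    by (rule integrable_measure_pmf_finite[OF finP])
  have E1: "measure_pmf.expectation Q (\<lambda>x. exp (l * W x)) \<le> exp (K*b)"
  proof -
    have "measure_pmf.expectation Q (\<lambda>x. exp (l * W x)) \<le>
          measure_pmf.expectation Q (\<lambda>x. 1 + l * W x + (W x)^2 * K)"
      by (intro integral_mono_AE intQ AE_pmfI)
         (unfold K_def, rule bennett_pt[OF Wb b lpos], assumption)
    also have "\<dots> = 1 + l * measure_pmf.expectation Q W + measure_pmf.expectation Q (\<lambda>x. (W x)^2) * K"
      by (simp add: intQ)
    also have "\<dots> \<le> 1 + K * b" using m0 m2 K0 by (simp add: mult.commute mult_left_mono)
    also have "\<dots> \<le> exp (K*b)" by simp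
    finally show ?thesis .
  qed
  define u where "u d = (\<Prod>j\<in>I. exp (l * W (d j)))" for d :: "'i \<Rightarrow> 'a"
  have Eu: "measure_pmf.expectation P u = (\<Prod>j\<in>I. measure_pmf.expectation Q (\<lambda>x. exp (l * W x)))"
    unfolding u_def P_def by (rule expectation_prod_Pi_pmf[OF I]) (auto simp: intQ)
  also have "\<dots> \<le> (\<Prod>j\<in>I. exp (K*b))"
    by (intro prod_mono conjI E1 integral_nonneg_AE AE_pmfI) auto
  also have "\<dots> = exp (real (card I) * (K*b))" by (simp add: exp_of_nat_mult)
  finally have Eu': "measure_pmf.expectation P u \<le> exp (real (card I) * (K*b))" .
  define c where "c = exp (l * (real (card I) * \<epsilon>))"
  have cpos: "c > 0" unfolding c_def by simp
  have ueq: "u d = exp (l * (\<Sum>j\<in>I. W (d j)))" for d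
    unfolding u_def by (simp add: exp_sum[OF I] sum_distrib_left)
  have seteq: "{d. real (card I) * \<epsilon> \<le> (\<Sum>j\<in>I. W (d j))} = {d \<in> space (measure_pmf P). u d \<ge> c}"
    using lpos by (auto simp: ueq c_def)
  have "measure_pmf.prob P {d \<in> space (measure_pmf P). u d \<ge> c} \<le> measure_pmf.expectation P u / c"
    by (rule integral_Markov_inequality_measure[OF intP]) (auto simp: u_def cpos intro!: AE_pmfI prod_nonneg)
  also have "\<dots> \<le> exp (real (card I) * (K*b)) / c"
    by (intro divide_right_mono Eu') (simp add: cpos less_imp_le)
  also have "\<dots> = exp (real (card I) * (K*b) - l * (real (card I) * \<epsilon>))"
    unfolding c_def by (simp add: exp_diff)
  also have "real (card I) * (K*b) - l * (real (card I) * \<epsilon>) = - real (card I) * ((1+\<epsilon>) * ln (1+\<epsilon>) - \<epsilon>) / b"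
  proof -
    have "K*b = (\<epsilon> - ln (1+\<epsilon>)) / b" unfolding K_def using b e by (simp add: elb lb power2_eq_square)
    hence "K*b - l*\<epsilon> = - ((1+\<epsilon>) * ln (1+\<epsilon>) - \<epsilon>) / b" using b by (simp add: l_def field_simps)
    hence "real (card I) * (K*b - l*\<epsilon>) = real (card I) * (- ((1+\<epsilon>) * ln (1+\<epsilon>) - \<epsilon>) / b)" by simp
    thus ?thesis by (simp add: algebra_simps)
  qed
  finally show ?thesis unfolding P_def seteq .
qed


lemma cheb_bern:
  fixes W :: "'a set" and D :: "'a \<Rightarrow> real"
  assumes W: "finite W" and p: "0 < p" "p \<le> 1" and a: "a > 0"
  shows "measure_pmf.prob (Pi_pmf W False (\<lambda>_. bernoulli_pmf p))
           {f. a \<le> \<bar>(\<Sum>w\<in>W. if f w then D w / p else 0) - (\<Sum>w\<in>W. D w)\<bar>}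
         \<le> (1-p)/p * (\<Sum>w\<in>W. (D w)^2) / a^2"
proof -
  define P where "P = Pi_pmf W False (\<lambda>_. bernoulli_pmf p)"
  have finB: "finite (set_pmf (bernoulli_pmf p))" by (rule finite_subset[OF subset_UNIV]) simp
  have finP: "finite (set_pmf P)" unfolding P_def by (rule finite_set_Pi_pmf[OF W finB])
  have intP: "integrable (measure_pmf P) f" for f :: "('a \<Rightarrow> bool) \<Rightarrow> real"
    by (rule integrable_measure_pmf_finite[OF finP])
  define I where "I w f = (if f w then 1 else 0::real)" for w and f :: "'a \<Rightarrow> bool"
  have EII: "measure_pmf.expectation P (\<lambda>f. I j f * I k f) = (if j = k then p else p^2)"
    if jk: "j \<in> W" "k \<in> W" for j k
  proof -
    define g where "g x v = (if x \<in> {j,k} then (if v then 1 else 0::real) else 1)" for x v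
    have "(\<lambda>f. I j f * I k f) = (\<lambda>f. \<Prod>x\<in>W. g x (f x))"
    proof
      fix f :: "'a \<Rightarrow> bool"
      have "(\<Prod>x\<in>W. g x (f x)) = (\<Prod>x\<in>W \<inter> {j,k}. (if f x then 1 else 0::real))"
        unfolding g_def by (rule prod.inter_restrict[OF W, symmetric])
      also have "W \<inter> {j,k} = {j,k}" using jk by auto
      finally show "I j f * I k f = (\<Prod>x\<in>W. g x (f x))" by (cases "j = k") (auto simp: I_def)
    qed
    hence "measure_pmf.expectation P (\<lambda>f. I j f * I k f) = (\<Prod>x\<in>W. measure_pmf.expectation (bernoulli_pmf p) (g x))"
      unfolding P_def by (simp only:) (rule expectation_prod_Pi_pmf[OF W], auto simp: integrable_measure_pmf_finite[OF finB] g_def)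
    also have "\<dots> = (\<Prod>x\<in>W. if x \<in> {j,k} then p else 1)"
      using p by (intro prod.cong) (auto simp: g_def)
    also have "\<dots> = (\<Prod>x\<in>W \<inter> {j,k}. p)" by (rule prod.inter_restrict[OF W, symmetric])
    also have "W \<inter> {j,k} = {j,k}" using jk by auto
    finally show ?thesis by (simp add: power2_eq_square)
  qed
  have EI: "measure_pmf.expectation P (I j) = p" if "j \<in> W" for j
  proof -
    have "I j = (\<lambda>f. I j f * I j f)" by (auto simp: I_def)
    thus ?thesis using EII[OF that that] by simp
  qed
  have Ecross: "measure_pmf.expectation P (\<lambda>f. (I j f / p - 1) * (I k f / p - 1)) = (if j = k then 1/p - 1 else 0)"
    if jk: "j \<in> W" "k \<in> W" for j k
  proof -
    have "(\<lambda>f. (I j f / p - 1) * (I k f / p - 1)) = (\<lambda>f. (I j f * I k f) / p^2 - I j f / p - I k f / p + 1)"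
      using p by (auto simp: field_simps power2_eq_square)
    hence "measure_pmf.expectation P (\<lambda>f. (I j f / p - 1) * (I k f / p - 1)) =
       measure_pmf.expectation P (\<lambda>f. I j f * I k f) / p^2 - measure_pmf.expectation P (I j) / p
         - measure_pmf.expectation P (I k) / p + 1"
      by (simp add: intP)
    also have "\<dots> = (if j = k then 1/p - 1 else 0)"
      using p by (simp add: EII[OF jk] EI jk power2_eq_square field_simps)
    finally show ?thesis .
  qed
  define Y where "Y f = (\<Sum>w\<in>W. D w * (I w f / p - 1))" for f
  have XY: "(\<Sum>w\<in>W. if f w then D w / p else 0) - (\<Sum>w\<in>W. D w) = Y f" for f
    unfolding Y_def by (subst sum_subtractf[symmetric]) (auto intro!: sum.cong simp: I_def algebra_simps)
  have "measure_pmf.expectation P (\<lambda>f. (Y f)^2) =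
        measure_pmf.expectation P (\<lambda>f. \<Sum>j\<in>W. \<Sum>k\<in>W. D j * D k * ((I j f / p - 1) * (I k f / p - 1)))"
    unfolding Y_def power2_eq_square sum_product by (simp add: algebra_simps)
  also have "\<dots> = (\<Sum>j\<in>W. \<Sum>k\<in>W. D j * D k * measure_pmf.expectation P (\<lambda>f. (I j f / p - 1) * (I k f / p - 1)))"
    by (simp add: intP)
  also have "\<dots> = (\<Sum>j\<in>W. \<Sum>k\<in>W. D j * D k * (if j = k then 1/p - 1 else 0))"
    by (intro sum.cong refl) (simp add: Ecross)
  also have "\<dots> = (\<Sum>j\<in>W. D j * D j * (1/p - 1))"
    by (intro sum.cong refl) (simp add: if_distrib W cong: if_cong)
  also have "\<dots> = (1-p)/p * (\<Sum>w\<in>W. (D w)^2)"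
    using p by (simp add: sum_distrib_left power2_eq_square field_simps)
  finally have EY: "measure_pmf.expectation P (\<lambda>f. (Y f)^2) = (1-p)/p * (\<Sum>w\<in>W. (D w)^2)" .
  have "{f. a \<le> \<bar>(\<Sum>w\<in>W. if f w then D w / p else 0) - (\<Sum>w\<in>W. D w)\<bar>} =
        {f \<in> space (measure_pmf P). (Y f)^2 \<ge> a^2}"
    using a by (auto simp: XY abs_le_square_iff[symmetric] abs_of_pos)
  hence "measure_pmf.prob P {f. a \<le> \<bar>(\<Sum>w\<in>W. if f w then D w / p else 0) - (\<Sum>w\<in>W. D w)\<bar>} =
         measure_pmf.prob P {f \<in> space (measure_pmf P). (Y f)^2 \<ge> a^2}" by simp
  also have "\<dots> \<le> measure_pmf.expectation P (\<lambda>f. (Y f)^2) / a^2"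
    by (rule integral_Markov_inequality_measure[OF intP]) (use a in auto)
  finally show ?thesis unfolding P_def EY[unfolded P_def] .
qed


lemma estimator_bern:
  fixes W :: "'a set" and D :: "'a \<Rightarrow> real"
  assumes W: "finite W" and p: "0 < p" "p \<le> 1" and D: "\<And>w. D w \<ge> 0"
    and C: "C = (\<Sum>w\<in>W. D w)" "C > 0" and pd: "1 / (1 + \<delta> * \<epsilon>^2) \<le> p"
    and e: "\<epsilon> > 0" and d: "\<delta> > 0"
  shows "measure_pmf.prob (Pi_pmf W False (\<lambda>_. bernoulli_pmf p))
           {f. \<epsilon> * C \<le> \<bar>(\<Sum>w\<in>W. if f w then D w / p else 0) - C\<bar>} \<le> \<delta>"
proof -
  have "measure_pmf.prob (Pi_pmf W False (\<lambda>_. bernoulli_pmf p))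
           {f. \<epsilon> * C \<le> \<bar>(\<Sum>w\<in>W. if f w then D w / p else 0) - C\<bar>}
        \<le> (1-p)/p * (\<Sum>w\<in>W. (D w)^2) / (\<epsilon> * C)^2"
    unfolding C(1) by (rule cheb_bern[OF W p]) (use C e in simp)
  also have "\<dots> \<le> (\<delta> * \<epsilon>^2) * C^2 / (\<epsilon> * C)^2"
  proof (intro divide_right_mono mult_mono)
    have X: "0 < 1 + \<delta> * \<epsilon>^2" using d by (simp add: add_pos_nonneg)
    have "1 \<le> p * (1 + \<delta> * \<epsilon>^2)" using pd X by (simp add: divide_le_eq mult.commute)
    thus "(1-p)/p \<le> \<delta> * \<epsilon>^2" using p by (simp add: field_simps)
    have "(\<Sum>w\<in>W. (D w)^2) \<le> (\<Sum>w\<in>W. D w * C)"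
      unfolding power2_eq_square C(1)
      by (intro sum_mono mult_left_mono member_le_sum) (auto simp: D W)
    also have "\<dots> = C^2" by (subst sum_distrib_right[symmetric]) (simp add: C(1)[symmetric] power2_eq_square)
    finally show "(\<Sum>w\<in>W. (D w)^2) \<le> C^2" .
  qed (use p e d in \<open>auto intro!: sum_nonneg\<close>)
  also have "\<dots> = \<delta>" using e C by (simp add: power_mult_distrib)
  finally show ?thesis .
qed

lemma inst_first:
  assumes "i \<in> {1..6}" "is_inst E \<tau> i a b c d"
  shows "ts_of E a < ts_of E b \<and> ts_of E a < ts_of E c \<and> ts_of E a < ts_of E d \<and>
         a < length E \<and> b < length E \<and> c < length E \<and> d < length E \<and> a \<noteq> b"
proof -
  have "i = 1 \<or> i = 2 \<or> i = 3 \<or> i = 4 \<or> i = 5 \<or> i = 6" using assms(1) by auto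
  moreover have "up_of E a \<noteq> up_of E b" "a < length E" "b < length E" "c < length E" "d < length E"
    and srt: "sorted_wrt (<) (map (\<lambda>k. ts_of E ([a, b, c, d] ! (k - 1))) (sigma i))"
    using assms(2) unfolding is_inst_def by blast+
  moreover have "a \<noteq> b" using calculation(2) by auto
  ultimately show ?thesis
    by (elim disjE) (simp_all add: sigma_def)
qed

lemma sum_C_edge:
  assumes "i \<in> {1..6}"
  shows "(\<Sum>e<length E. C_edge E \<tau> i e) = C_count E \<tau> i"
proof -
  define F where "F e = {S. \<exists>b c d. S = {e, b, c, d} \<and> is_inst E \<tau> i e b c d}" for e
  have inst: "instances E \<tau> i = (\<Union>e\<in>{..<length E}. F e)"
  proof (rule set_eqI iffI)+
    fix S assume "S \<in> instances E \<tau> i"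
    then obtain a b c d where S: "S = {a,b,c,d}" "is_inst E \<tau> i a b c d" unfolding instances_def by blast
    have "a < length E" using inst_first[OF assms S(2)] by blast
    thus "S \<in> (\<Union>e\<in>{..<length E}. F e)" unfolding F_def using S by blast
  next
    fix S assume "S \<in> (\<Union>e\<in>{..<length E}. F e)"
    then obtain e b c d where S: "S = {e,b,c,d}" "is_inst E \<tau> i e b c d" unfolding F_def by blast
    thus "S \<in> instances E \<tau> i" unfolding instances_def by blast
  qed
  have fin: "finite (F e)" for e
  proof (rule finite_subset[of _ "Pow (insert e {..<length E})"])
    show "F e \<subseteq> Pow (insert e {..<length E})" unfolding F_def using inst_first[OF assms] by fastforce
  qed simp
  have disj: "F e \<inter> F e' = {}" if "e \<noteq> e'" for e e'
  proof (rule ccontr)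
    assume "F e \<inter> F e' \<noteq> {}"
    then obtain S b c d b' c' d' where S: "S = {e,b,c,d}" "is_inst E \<tau> i e b c d"
      "S = {e',b',c',d'}" "is_inst E \<tau> i e' b' c' d'" unfolding F_def by blast
    have "e' \<in> {e,b,c,d}" using S(1,3) by auto
    hence 1: "ts_of E e < ts_of E e'"
      using inst_first[OF assms S(2)] that by auto
    have "e \<in> {e',b',c',d'}" using S(1,3) by auto
    hence 2: "ts_of E e' < ts_of E e"
      using inst_first[OF assms S(4)] that by auto
    show False using 1 2 by simp
  qed
  have "C_count E \<tau> i = card (\<Union>e\<in>{..<length E}. F e)" unfolding C_count_def inst ..
  also have "\<dots> = (\<Sum>e<length E. card (F e))"
    by (rule card_UN_disjoint) (auto simp: fin disj)
  finally show ?thesis unfolding C_edge_def F_def by simp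
qed

lemma C_count_len:
  assumes "i \<in> {1..6}" "C_count E \<tau> i > 0"
  shows "length E \<ge> 2"
proof -
  have "instances E \<tau> i \<noteq> {}" using assms(2) unfolding C_count_def by (metis card.empty less_irrefl)
  then obtain a b c d where "is_inst E \<tau> i a b c d" unfolding instances_def by blast
  from inst_first[OF assms(1) this] show ?thesis by linarith
qed


lemma tbcE_ok:
  assumes i: "i \<in> {1..6}" and C: "C_count E \<tau> i > 0" and p: "0 < p" "p \<le> 1"
    and pd: "1 / (1 + \<delta> * \<epsilon>^2) \<le> p" and e: "\<epsilon> > 0" and d: "\<delta> > 0"
  shows "eps_delta_estimator (tbcE E \<tau> i p) (real (C_count E \<tau> i)) \<epsilon> \<delta>"
proof -
  define D where "D e = real (C_edge E \<tau> i e)" for e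
  define C where "C = real (C_count E \<tau> i)"
  have CD: "C = (\<Sum>e\<in>{..<length E}. D e)" unfolding C_def D_def sum_C_edge[OF i, symmetric] by simp
  have sumeq: "(\<Sum>e\<in>{e. e < length E \<and> f e}. D e / p) = (\<Sum>e\<in>{..<length E}. if f e then D e / p else 0)" for f
  proof -
    have "{e. e < length E \<and> f e} = {e\<in>{..<length E}. f e}" by auto
    thus ?thesis by (simp only:) (rule sum.inter_filter, simp)
  qed
  have "measure_pmf.prob (Pi_pmf {..<length E} False (\<lambda>_. bernoulli_pmf p))
           {f. \<epsilon> * C \<le> \<bar>(\<Sum>w\<in>{..<length E}. if f w then D w / p else 0) - C\<bar>} \<le> \<delta>"
    by (rule estimator_bern[OF _ p _ CD _ pd e d]) (use C in \<open>auto simp: D_def C_def\<close>)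
  from this[unfolded D_def C_def] show ?thesis
    unfolding eps_delta_estimator_def tbcE_def measure_map_pmf vimage_def
    by (simp add: sumeq[unfolded D_def])
qed

lemma tbcN_ok:
  assumes i: "i \<in> {1..6}" and C: "C_count E \<tau> i > 0" and p: "0 < p" "p \<le> 1"
    and pd: "1 / (1 + \<delta> * \<epsilon>^2) \<le> p" and e: "\<epsilon> > 0" and d: "\<delta> > 0"
    and W: "finite W" and proj: "\<And>e. e < length E \<Longrightarrow> proj e \<in> W"
  shows "eps_delta_estimator (tbcN W proj E \<tau> i p) (real (C_count E \<tau> i)) \<epsilon> \<delta>"
proof -
  define Ce where "Ce e = real (C_edge E \<tau> i e)" for e
  define D where "D w = (\<Sum>e\<in>{e\<in>{..<length E}. proj e = w}. Ce e)" for w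
  define C where "C = real (C_count E \<tau> i)"
  have img: "proj ` {..<length E} \<subseteq> W" using proj by auto
  have "C = (\<Sum>e\<in>{..<length E}. Ce e)" unfolding C_def Ce_def sum_C_edge[OF i, symmetric] by simp
  also have "\<dots> = (\<Sum>w\<in>W. D w)" unfolding D_def by (rule sum.group[OF _ W img, symmetric]) simp
  finally have CD: "C = (\<Sum>w\<in>W. D w)" .
  have sumeq: "(\<Sum>e\<in>{e. e < length E \<and> proj e \<in> W \<and> f (proj e)}. Ce e / p) = (\<Sum>w\<in>W. if f w then D w / p else 0)" for f
  proof -
    have "{e. e < length E \<and> proj e \<in> W \<and> f (proj e)} = {e\<in>{..<length E}. f (proj e)}" using proj by auto
    hence "(\<Sum>e\<in>{e. e < length E \<and> proj e \<in> W \<and> f (proj e)}. Ce e / p) =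
           (\<Sum>e\<in>{..<length E}. if f (proj e) then Ce e / p else 0)" by (simp only:) (rule sum.inter_filter, simp)
    also have "\<dots> = (\<Sum>w\<in>W. \<Sum>e\<in>{e\<in>{..<length E}. proj e = w}. if f (proj e) then Ce e / p else 0)"
      by (rule sum.group[OF _ W img, symmetric]) simp
    also have "\<dots> = (\<Sum>w\<in>W. if f w then D w / p else 0)"
      unfolding D_def by (intro sum.cong refl) (auto simp: sum_divide_distrib)
    finally show ?thesis .
  qed
  have "measure_pmf.prob (Pi_pmf W False (\<lambda>_. bernoulli_pmf p))
           {f. \<epsilon> * C \<le> \<bar>(\<Sum>w\<in>W. if f w then D w / p else 0) - C\<bar>} \<le> \<delta>"
    by (rule estimator_bern[OF W p _ CD _ pd e d]) (use C in \<open>auto simp: D_def C_def Ce_def intro!: sum_nonneg\<close>)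
  thus ?thesis
    unfolding eps_delta_estimator_def tbcN_def measure_map_pmf vimage_def
    by (simp add: sumeq[unfolded Ce_def] C_def Ce_def)
qed


lemma h_pos:
  assumes "(\<epsilon>::real) > 0"
  shows "(1 + \<epsilon>) * ln (1 + \<epsilon>) - \<epsilon> > 0"
proof -
  define u where "u = \<epsilon> / (1 + \<epsilon>)"
  have u: "0 < u" "u < 1" using assms by (auto simp: u_def field_simps)
  have "exp (-u) = exp (-u/2) * exp (-u/2)" by (simp flip: exp_add)
  also have "\<dots> \<ge> (1 - u/2) * (1 - u/2)"
    using exp_ge_add_one_self[of "-u/2"] u by (intro mult_mono) auto
  moreover have "(1 - u/2) * (1 - u/2) = 1 - u + u^2/4" by (simp add: power2_eq_square algebra_simps)
  moreover have "u^2 > 0" using u by simp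
  ultimately have "exp (-u) > 1 - u" by linarith
  hence "exp u < 1 / (1 - u)" using u by (simp add: exp_minus field_simps)
  also have "1 / (1 - u) = 1 + \<epsilon>" using assms by (simp add: u_def field_simps)
  finally have "u < ln (1 + \<epsilon>)" using assms by (metis exp_less_cancel_iff exp_ln add_pos_pos zero_less_one)
  hence "(1 + \<epsilon>) * u < (1 + \<epsilon>) * ln (1 + \<epsilon>)" using assms by simp
  thus ?thesis using assms by (simp add: u_def)
qed




lemma tbcI_ok:
  assumes i: "i \<in> {1..6}" and Cpos: "C_count E \<tau> i > 0" and tau: "\<tau> > 0"
    and c: "c > 0" and s: "s > 0" and e: "\<epsilon> > 0" and d: "\<delta> > 0"
    and sb: "real s \<ge> (real (length E) - 1) * ln (2 / \<delta>) / ((1 + \<epsilon>) * ln (1 + \<epsilon>) - \<epsilon>)"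
  shows "eps_delta_estimator (tbcI E \<tau> i c s) (real (C_count E \<tau> i)) \<epsilon> \<delta>"
proof -
  define m where "m = length E"
  have m2: "m \<ge> 2" unfolding m_def by (rule C_count_len[OF i Cpos])
  define b where "b = real m - 1"
  have b1: "b \<ge> 1" using m2 unfolding b_def by simp
  define h where "h = (1 + \<epsilon>) * ln (1 + \<epsilon>) - \<epsilon>"
  have hpos: "h > 0" unfolding h_def by (rule h_pos[OF e])
  define Ce where "Ce e = real (C_edge E \<tau> i e)" for e
  define C where "C = real (C_count E \<tau> i)"
  have CS: "C = (\<Sum>e<m. Ce e)" unfolding C_def Ce_def m_def sum_C_edge[OF i, symmetric] by simp
  have Cp: "C > 0" using Cpos unfolding C_def by simp
  define mp where "mp e = real (m_prime E \<tau> c e)" for e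
  have mp1: "mp e \<ge> 1" if "e < m" for e
  proof -
    have "e \<in> {e'. e' < length E \<and> ts_of E e - c * \<tau> \<le> ts_of E e' \<and> ts_of E e' \<le> ts_of E e}"
      using that c tau by (simp add: m_def)
    moreover have "finite {e'. e' < length E \<and> ts_of E e - c * \<tau> \<le> ts_of E e' \<and> ts_of E e' \<le> ts_of E e}" by simp
    ultimately have "m_prime E \<tau> c e > 0" unfolding m_prime_def by (metis card_gt_0_iff empty_iff)
    thus ?thesis unfolding mp_def by simp
  qed
  define P where "P k e = (ts_of E k \<le> ts_of E e \<and> ts_of E e \<le> ts_of E k + c * \<tau>)" for k e
  define F where "F e = real m / (real s * mp e) * Ce e" for e
  define g where "g k = (\<Sum>e\<in>{e. e < m \<and> P k e}. F e)" for k
  have Fnn: "F e \<ge> 0" for e unfolding F_def Ce_def mp_def by simp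
  have gsum: "g k = (\<Sum>e<m. if P k e then F e else 0)" for k
  proof -
    have "{e. e < m \<and> P k e} = {e\<in>{..<m}. P k e}" by auto
    thus ?thesis unfolding g_def by (simp only:) (rule sum.inter_filter, simp)
  qed
  have gnn: "g k \<ge> 0" for k unfolding g_def by (intro sum_nonneg Fnn)
  have gle: "g k \<le> real m * C / real s" for k
  proof -
    have "g k \<le> (\<Sum>e<m. F e)" unfolding gsum by (intro sum_mono) (auto simp: Fnn)
    also have "\<dots> \<le> (\<Sum>e<m. real m / real s * Ce e)"
    proof (intro sum_mono)
      fix e assume "e \<in> {..<m}"
      hence "mp e \<ge> 1" by (intro mp1) simp
      hence "real m / (real s * mp e) \<le> real m / real s"
        using s by (intro divide_left_mono) (auto intro!: mult_pos_pos)
      thus "F e \<le> real m / real s * Ce e" unfolding F_def by (intro mult_right_mono) (auto simp: Ce_def)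
    qed
    also have "\<dots> = real m * C / real s" unfolding CS by (simp add: sum_distrib_left sum_divide_distrib)
    finally show ?thesis .
  qed
  define Q where "Q = pmf_of_set {..<m}"
  have setQ: "set_pmf Q = {..<m}" unfolding Q_def using m2 by (simp add: lessThan_empty_iff)
  have finQ: "finite (set_pmf Q)" by (simp add: setQ)
  have intQ: "integrable (measure_pmf Q) f" for f :: "nat \<Rightarrow> real"
    by (rule integrable_measure_pmf_finite[OF finQ])
  have Eg: "measure_pmf.expectation Q g = C / real s"
  proof -
    have "(\<Sum>k<m. g k) = (\<Sum>e<m. \<Sum>k<m. if P k e then F e else 0)"
      unfolding gsum by (rule sum.swap)
    also have "\<dots> = (\<Sum>e<m. mp e * F e)"
    proof (intro sum.cong refl)
      fix e assume e: "e \<in> {..<m}"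
      have "(\<Sum>k<m. if P k e then F e else 0) = (\<Sum>k\<in>{k\<in>{..<m}. P k e}. F e)"
        by (rule sum.inter_filter[symmetric]) simp
      also have "{k\<in>{..<m}. P k e} = {e'. e' < length E \<and> ts_of E e - c * \<tau> \<le> ts_of E e' \<and> ts_of E e' \<le> ts_of E e}"
        unfolding P_def m_def by auto
      finally show "(\<Sum>k<m. if P k e then F e else 0) = mp e * F e"
        unfolding mp_def m_prime_def by simp
    qed
    also have "\<dots> = (\<Sum>e<m. real m / real s * Ce e)"
    proof (intro sum.cong refl)
      fix e assume "e \<in> {..<m}"
      hence "mp e \<ge> 1" by (intro mp1) simp
      thus "mp e * F e = real m / real s * Ce e" unfolding F_def using s by (simp add: field_simps)
    qed
    also have "\<dots> = real m * C / real s" unfolding CS by (simp add: sum_distrib_left sum_divide_distrib)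
    finally have "(\<Sum>k<m. g k) = real m * C / real s" .
    thus ?thesis unfolding Q_def using m2 by (subst integral_pmf_of_set) (auto simp: lessThan_empty_iff)
  qed
  define Z where "Z k = real s * g k / C - 1" for k
  have Zle: "Z k \<le> b" for k
  proof -
    have "real s * g k \<le> real s * (real m * C / real s)" using gle[of k] by (intro mult_left_mono) auto
    hence "real s * g k / C \<le> real m" using s Cp by (simp add: divide_le_eq mult.commute)
    thus ?thesis unfolding Z_def b_def by simp
  qed
  have Zge: "Z k \<ge> -1" for k unfolding Z_def using gnn[of k] Cp by simp
  have EZ: "measure_pmf.expectation Q Z = 0"
    unfolding Z_def using Eg Cp s by (simp add: intQ)
  have EZ2: "measure_pmf.expectation Q (\<lambda>k. (Z k)^2) \<le> b"
  proof -
    have "measure_pmf.expectation Q (\<lambda>k. (Z k)^2) \<le> measure_pmf.expectation Q (\<lambda>k. (b - 1) * Z k + b)"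
    proof (intro integral_mono intQ)
      fix k
      have "0 \<le> (Z k + 1) * (b - Z k)" using Zle[of k] Zge[of k] by (intro mult_nonneg_nonneg) auto
      thus "(Z k)^2 \<le> (b - 1) * Z k + b" by (simp add: power2_eq_square algebra_simps)
    qed
    also have "\<dots> = b" using EZ by (simp add: intQ)
    finally show ?thesis .
  qed
  have b0: "b > 0" using b1 by simp
  define B where "B = exp (- real s * h / b)"
  have Zle': "\<And>x. x \<in> set_pmf Q \<Longrightarrow> Z x \<le> b" using Zle by blast
  have P1: "measure_pmf.prob (Pi_pmf {..<s} 0 (\<lambda>_. Q)) {d. real s * \<epsilon> \<le> (\<Sum>j<s. Z (d j))} \<le> B"
    using chernoff_gen[OF finQ finite_lessThan[of s] Zle' b0 EZ EZ2 e, where dflt=0] unfolding B_def h_def card_lessThan .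
  have P2: "measure_pmf.prob (Pi_pmf {..<s} 0 (\<lambda>_. Q)) {d. real s * \<epsilon> \<le> (\<Sum>j<s. - Z (d j))} \<le> B"
  proof -
    have A1: "measure_pmf.expectation Q (\<lambda>k. - Z k) = 0" using EZ by simp
    have A2: "measure_pmf.expectation Q (\<lambda>k. (- Z k)^2) \<le> b" using EZ2 by simp
    have A3: "\<And>k. k \<in> set_pmf Q \<Longrightarrow> - Z k \<le> b" using Zge b1 by (metis add.inverse_inverse le_minus_iff order_trans)
    show ?thesis
      using chernoff_gen[OF finQ finite_lessThan[of s] A3 b0 A1 A2 e, where dflt=0] unfolding B_def h_def card_lessThan .
  qed
  have Bd: "B \<le> \<delta> / 2"
  proof -
    have "b * ln (2 / \<delta>) / h \<le> real s" using sb unfolding b_def h_def m_def by simp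
    hence "b * ln (2 / \<delta>) \<le> real s * h" using hpos by (simp add: divide_le_eq)
    hence "ln (2 / \<delta>) \<le> real s * h / b" using b0 by (simp add: le_divide_eq mult.commute)
    hence "- real s * h / b \<le> - ln (2 / \<delta>)" by simp
    hence "B \<le> exp (- ln (2 / \<delta>))" unfolding B_def by simp
    also have "\<dots> = \<delta> / 2" using d by (simp add: exp_minus)
    finally show ?thesis .
  qed
  have Xeq: "(\<Sum>j<s. \<Sum>e\<in>{e. e < length E \<and> ts_of E (dd j) \<le> ts_of E e \<and> ts_of E e \<le> ts_of E (dd j) + c * \<tau>}.
                     real (length E) / (real s * real (m_prime E \<tau> c e)) * real (C_edge E \<tau> i e))
             = C / real s * (\<Sum>j<s. Z (dd j)) + C" for dd
  proof -
    have "(\<Sum>j<s. \<Sum>e\<in>{e. e < length E \<and> ts_of E (dd j) \<le> ts_of E e \<and> ts_of E e \<le> ts_of E (dd j) + c * \<tau>}.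
                     real (length E) / (real s * real (m_prime E \<tau> c e)) * real (C_edge E \<tau> i e))
          = (\<Sum>j<s. g (dd j))" unfolding g_def F_def P_def m_def mp_def Ce_def by (rule refl)
    also have "\<dots> = (\<Sum>j<s. C / real s * Z (dd j) + C / real s)"
      by (intro sum.cong refl) (use Cp s in \<open>simp add: Z_def field_simps\<close>)
    also have "\<dots> = C / real s * (\<Sum>j<s. Z (dd j)) + C"
      using s by (simp add: sum.distrib sum_distrib_left)
    finally show ?thesis .
  qed
  have sub: "{dd. \<epsilon> * C \<le> \<bar>C / real s * (\<Sum>j<s. Z (dd j)) + C - C\<bar>} \<subseteq>
             {d. real s * \<epsilon> \<le> (\<Sum>j<s. Z (d j))} \<union> {d. real s * \<epsilon> \<le> (\<Sum>j<s. - Z (d j))}"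
  proof
    fix dd assume "dd \<in> {dd. \<epsilon> * C \<le> \<bar>C / real s * (\<Sum>j<s. Z (dd j)) + C - C\<bar>}"
    hence "\<epsilon> * C \<le> C / real s * \<bar>\<Sum>j<s. Z (dd j)\<bar>" using Cp s by (simp add: abs_mult)
    hence "\<epsilon> * C * real s \<le> C * \<bar>\<Sum>j<s. Z (dd j)\<bar>" using s by (simp add: field_simps)
    hence "C * (real s * \<epsilon>) \<le> C * \<bar>\<Sum>j<s. Z (dd j)\<bar>" by (simp only: mult_ac)
    hence "real s * \<epsilon> \<le> \<bar>\<Sum>j<s. Z (dd j)\<bar>" using Cp by (simp only: mult_le_cancel_left_pos)
    hence "real s * \<epsilon> \<le> (\<Sum>j<s. Z (dd j)) \<or> real s * \<epsilon> \<le> - (\<Sum>j<s. Z (dd j))"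
      by (cases "(\<Sum>j<s. Z (dd j)) \<ge> 0") auto
    thus "dd \<in> {d. real s * \<epsilon> \<le> (\<Sum>j<s. Z (d j))} \<union> {d. real s * \<epsilon> \<le> (\<Sum>j<s. - Z (d j))}"
      by (simp add: sum_negf)
  qed
  have "measure_pmf.prob (Pi_pmf {..<s} 0 (\<lambda>_. Q)) {dd. \<epsilon> * C \<le> \<bar>C / real s * (\<Sum>j<s. Z (dd j)) + C - C\<bar>}
        \<le> measure_pmf.prob (Pi_pmf {..<s} 0 (\<lambda>_. Q)) ({d. real s * \<epsilon> \<le> (\<Sum>j<s. Z (d j))} \<union> {d. real s * \<epsilon> \<le> (\<Sum>j<s. - Z (d j))})"
    by (rule measure_pmf.finite_measure_mono[OF sub]) simp
  also have "\<dots> \<le> B + B"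
    by (rule order.trans[OF measure_Un_le]) (use P1 P2 in auto)
  also have "\<dots> \<le> \<delta>" using Bd by simp
  finally have fin: "measure_pmf.prob (Pi_pmf {..<s} 0 (\<lambda>_. Q)) {dd. \<epsilon> * C \<le> \<bar>C / real s * (\<Sum>j<s. Z (dd j)) + C - C\<bar>} \<le> \<delta>" .
  show ?thesis
    unfolding eps_delta_estimator_def tbcI_def measure_map_pmf vimage_def
    using fin unfolding Q_def m_def C_def Xeq[unfolded C_def m_def] by simp
qed


theorem theorem4p3:
  fixes U L :: "'v set" and E :: "('v \<times> 'v \<times> real) list"
    and \<tau> \<epsilon> \<delta> :: real and i :: nat
  assumes "temporal_bipartite_graph U L E"
    and "\<tau> > 0"
    and "i \<in> {1..6}"
    and "0 < \<epsilon>" and "\<epsilon> < 1" and "0 < \<delta>" and "\<delta> < 1"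
    and "C_count E \<tau> i > 0"
  shows "(\<forall>p. 1 / (1 + \<delta> * \<epsilon>^2) \<le> p \<and> p \<le> 1 \<longrightarrow>
            eps_delta_estimator (tbcE E \<tau> i p) (real (C_count E \<tau> i)) \<epsilon> \<delta> \<and>
            eps_delta_estimator (tbcN_U U E \<tau> i p) (real (C_count E \<tau> i)) \<epsilon> \<delta> \<and>
            eps_delta_estimator (tbcN_L L E \<tau> i p) (real (C_count E \<tau> i)) \<epsilon> \<delta>) \<and>
         (\<forall>c s. c > 0 \<and> s > 0 \<and>
            real s \<ge> (real (length E) - 1) * ln (2 / \<delta>) / ((1 + \<epsilon>) * ln (1 + \<epsilon>) - \<epsilon>) \<longrightarrow>
            eps_delta_estimator (tbcI E \<tau> i c s) (real (C_count E \<tau> i)) \<epsilon> \<delta>)"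
proof (intro conjI allI impI)
  have G: "finite U" "finite L" "\<And>x. x \<in> set E \<Longrightarrow> fst x \<in> U \<and> fst (snd x) \<in> L"
    using assms(1) unfolding temporal_bipartite_graph_def by auto
  have upU: "up_of E e \<in> U" if "e < length E" for e
    using G(3)[OF nth_mem[OF that]] unfolding up_of_def by simp
  have loL: "lo_of E e \<in> L" if "e < length E" for e
    using G(3)[OF nth_mem[OF that]] unfolding lo_of_def by simp
  fix p assume p: "1 / (1 + \<delta> * \<epsilon>^2) \<le> p \<and> p \<le> 1"
  have X: "0 < 1 + \<delta> * \<epsilon>^2" using assms(6) by (simp add: add_pos_nonneg)
  have "0 < 1 / (1 + \<delta> * \<epsilon>^2)" using X by simp
  hence p0: "0 < p" using p by linarith
  show "eps_delta_estimator (tbcE E \<tau> i p) (real (C_count E \<tau> i)) \<epsilon> \<delta>"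
    using tbcE_ok[OF assms(3) assms(8) p0 conjunct2[OF p] conjunct1[OF p] assms(4) assms(6)] .
  show "eps_delta_estimator (tbcN_U U E \<tau> i p) (real (C_count E \<tau> i)) \<epsilon> \<delta>"
    unfolding tbcN_U_def using tbcN_ok[OF assms(3) assms(8) p0 conjunct2[OF p] conjunct1[OF p] assms(4) assms(6) G(1) upU] .
  show "eps_delta_estimator (tbcN_L L E \<tau> i p) (real (C_count E \<tau> i)) \<epsilon> \<delta>"
    unfolding tbcN_L_def using tbcN_ok[OF assms(3) assms(8) p0 conjunct2[OF p] conjunct1[OF p] assms(4) assms(6) G(2) loL] .
next
  fix c :: real and s :: nat
  assume cs: "c > 0 \<and> s > 0 \<and>
            real s \<ge> (real (length E) - 1) * ln (2 / \<delta>) / ((1 + \<epsilon>) * ln (1 + \<epsilon>) - \<epsilon>)"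
  show "eps_delta_estimator (tbcI E \<tau> i c s) (real (C_count E \<tau> i)) \<epsilon> \<delta>"
    using tbcI_ok[OF assms(3) assms(8) assms(2) conjunct1[OF cs] conjunct1[OF conjunct2[OF cs]] assms(4) assms(6) conjunct2[OF conjunct2[OF cs]]] .
qed

end
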